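(* Let $N\ge1$ and let $P_N$ be as in the context. For every $t\in(0,\pi)$ with $t\ne\frac{2\pi}{N+2}$, writing $c=\cos\frac{2\pi}{N+2}$, $$ 4|P_N(e^{it})|^2=\left(\frac{\cos\frac{(N+2)t}{2}}{\cos t-c}+\frac{2}{N+2}\cdot\frac{1-c}{1-\cos t}\cdot\frac{\sin t}{(\cos t-c)^2}\,\sin\frac{(N+2)t}{2}\right)^2+\left(\frac{\sin\frac{(N+2)t}{2}}{\cos t-c}\right)^2. $$
   Context: For an integer $N\ge1$ put, for $k=1,\dots,N$, $$b_k=\frac{(N-k+3)\sin\frac{(k+1)\pi}{N+2}-(N-k+1)\sin\frac{(k-1)\pi}{N+2}}{(N+2)\sin\frac{\pi}{N+2}},$$ and define $P_N(z)=\frac{1}{\sin\frac{2\pi}{N+2}}\sum_{k=1}^N b_k\sin\frac{k\pi}{N+2}\,z^k$ (so $P_N(0)=0$, $P_N'(0)=1$). *)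

theory Defs
  imports "HOL-Analysis.Analysis"
begin

definition b_coef :: "nat \<Rightarrow> nat \<Rightarrow> real" where
  "b_coef N k =
     ((real N - real k + 3) * sin ((real k + 1) * pi / (real N + 2))
      - (real N - real k + 1) * sin ((real k - 1) * pi / (real N + 2)))
     / ((real N + 2) * sin (pi / (real N + 2)))"

definition P_poly :: "nat \<Rightarrow> complex \<Rightarrow> complex" where
  "P_poly N z = (1 / complex_of_real (sin (2 * pi / (real N + 2)))) *
     (\<Sum>k=1..N. complex_of_real (b_coef N k * sin (real k * pi / (real N + 2))) * z ^ k)"

end

theory Submission
  imports Defs
begin


lemma geo1: fixes x :: complex assumes "x \<noteq> 1"
  shows "(\<Sum>k=1..n. x^k) = x*(x^n-1)/(x-1)"
  using assms by (induction n) (auto simp: field_simps)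
lemma geo2: fixes x :: complex assumes "x \<noteq> 1"
  shows "(\<Sum>k=1..n. of_nat k * x^k) = x*(1-(of_nat n+1)*x^n + of_nat n*(x^n*x))/(1-x)^2"
proof -
  have "x - 1 \<noteq> 0" "1 - x \<noteq> 0" using assms by auto
  moreover have "1 + x*x - x*2 = (1-x)*(1-x)" by (simp add: algebra_simps)
  hence "1 + x*x - x*2 \<noteq> 0" using \<open>1 - x \<noteq> 0\<close> by simp
  ultimately show ?thesis by (induction n) (auto simp: field_simps power2_eq_square)
qed

lemma inv_cis: "1/cis x = cis (-x)" by (metis cis_inverse inverse_eq_divide)
lemma sin_cis': "complex_of_real (sin x) = (cis x - 1/cis x) / (2*\<i>)"
  unfolding inv_cis by (simp add: complex_eq_iff)
lemma cos_cis': "complex_of_real (cos x) = (cis x + 1/cis x) / 2"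
  unfolding inv_cis by (simp add: complex_eq_iff)
lemma G: fixes q Qk Zk m kk :: complex
  assumes q0: "q \<noteq> 0" and q2: "q^2 - 1 \<noteq> 0" and Qk: "Qk \<noteq> 0" and m: "m \<noteq> 0"
  shows "((m - kk + 1) * ((Qk*q - 1/(Qk*q))/(2*\<i>)) - (m - kk - 1) * ((Qk/q - q/Qk)/(2*\<i>)))
            / (m * ((q - 1/q)/(2*\<i>))) * ((Qk - 1/Qk)/(2*\<i>)) * Zk
     = (1/(2*\<i>*m*(q^2-1))) * (((m+1)*q^2-(m-1)) * (Zk * Qk^2)
          - ((q^2-1) * (kk * (Zk * Qk^2))) + (((m+1)-(m-1)*q^2) * (Zk / Qk^2))
          + ((q^2-1) * (kk * (Zk / Qk^2))) - (2*(q^2+1) * Zk))"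
proof -
  have f1: "Qk*q - 1/(Qk*q) = (Qk^2*q^2-1)/(Qk*q)" "Qk/q - q/Qk = (Qk^2-q^2)/(q*Qk)"
     "Qk - 1/Qk = (Qk^2-1)/Qk" "q - 1/q = (q^2-1)/q"
    using q0 Qk by (simp_all add: field_simps power2_eq_square)
  have "((m - kk + 1) * ((Qk^2*q^2-1)/(Qk*q)/(2*\<i>)) - (m - kk - 1) * ((Qk^2-q^2)/(q*Qk)/(2*\<i>)))
            / (m * ((q^2-1)/q/(2*\<i>))) * ((Qk^2-1)/Qk/(2*\<i>)) * Zk
      = (((m - kk + 1) * (Qk^2*q^2-1) - (m - kk - 1) * (Qk^2-q^2)) * (Qk^2-1)) * Zk / (2*\<i>*m*(q^2-1)*Qk^2)"
    using q0 Qk m q2 by (simp add: field_simps power2_eq_square)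
  also have "\<dots> = (((m+1)*q^2-(m-1)) * Qk^4 - (q^2-1) * kk * Qk^4 + ((m+1)-(m-1)*q^2)
          + (q^2-1) * kk - 2*(q^2+1) * Qk^2) * Zk / (2*\<i>*m*(q^2-1)*Qk^2)"
    by (rule arg_cong[where f="\<lambda>x. x * Zk / (2*\<i>*m*(q^2-1)*Qk^2)"]) (simp add: algebra_simps power2_eq_square power4_eq_xxxx)
  also have "\<dots> = (1/(2*\<i>*m*(q^2-1))) * (((m+1)*q^2-(m-1)) * (Zk * Qk^2)
          - ((q^2-1) * (kk * (Zk * Qk^2))) + (((m+1)-(m-1)*q^2) * (Zk / Qk^2))
          + ((q^2-1) * (kk * (Zk / Qk^2))) - (2*(q^2+1) * Zk))"
    using q0 Qk m q2 by (simp add: field_simps power2_eq_square power4_eq_xxxx)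
  finally show ?thesis unfolding f1 .
qed

lemma pointwise:
  fixes M w :: real and k :: nat and z :: complex
  assumes M0: "M \<noteq> 0" and sw: "sin w \<noteq> 0"
  defines "q \<equiv> cis w"
  shows "complex_of_real (((M - real k + 1) * sin (real k * w + w) - (M - real k - 1) * sin (real k * w - w))
            / (M * sin w) * sin (real k * w)) * z^k
       = (1/(2*\<i>* of_real M*(q^2-1))) * (((of_real M+1)*q^2-(of_real M-1)) * (z*q^2)^k
          - (q^2-1) * (of_nat k * (z*q^2)^k) + ((of_real M+1)-(of_real M-1)*q^2) * (z/q^2)^k
          + (q^2-1) * (of_nat k * (z/q^2)^k) - 2*(q^2+1) * z^k)"
proof -
  have e1: "complex_of_real (sin (real k * w + w)) = (q^k*q - 1/(q^k*q))/(2*\<i>)"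
  proof -
    have "cis w ^ k * cis w = cis (real k * w + w)" by (metis Complex.DeMoivre cis_mult)
    then show ?thesis by (simp add: sin_cis' q_def)
  qed
  have e2: "complex_of_real (sin (real k * w - w)) = (q^k/q - q/q^k)/(2*\<i>)"
    by (simp add: sin_cis' q_def Complex.DeMoivre cis_divide inv_cis)
  have e3: "complex_of_real (sin (real k * w)) = (q^k - 1/q^k)/(2*\<i>)"
    by (simp add: sin_cis' q_def Complex.DeMoivre)
  have e4: "complex_of_real (sin w) = (q - 1/q)/(2*\<i>)"
    by (simp add: sin_cis' q_def)
  have q0: "q \<noteq> 0" by (simp add: q_def)
  have qq: "q - 1/q \<noteq> 0" using sw e4 by auto
  have q2: "q^2 - 1 \<noteq> 0" using qq q0 by (auto simp: field_simps power2_eq_square)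
  have qk: "q^k \<noteq> 0" using q0 by simp
  have "complex_of_real (((M - real k + 1) * sin (real k * w + w) - (M - real k - 1) * sin (real k * w - w))
            / (M * sin w) * sin (real k * w))
     = ((of_real M - of_nat k + 1) * of_real (sin (real k * w + w)) - (of_real M - of_nat k - 1) * of_real (sin (real k * w - w)))
            / (of_real M * of_real (sin w)) * of_real (sin (real k * w))" by simp
  also have "\<dots> = ((of_real M - of_nat k + 1) * ((q^k*q - 1/(q^k*q))/(2*\<i>)) - (of_real M - of_nat k - 1) * ((q^k/q - q/q^k)/(2*\<i>)))
            / (of_real M * ((q - 1/q)/(2*\<i>))) * ((q^k - 1/q^k)/(2*\<i>))"
    unfolding e1 e2 e3 e4 ..
  finally have L: "complex_of_real (((M - real k + 1) * sin (real k * w + w) - (M - real k - 1) * sin (real k * w - w))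
            / (M * sin w) * sin (real k * w)) = ((of_real M - of_nat k + 1) * ((q^k*q - 1/(q^k*q))/(2*\<i>)) - (of_real M - of_nat k - 1) * ((q^k/q - q/q^k)/(2*\<i>)))
            / (of_real M * ((q - 1/q)/(2*\<i>))) * ((q^k - 1/q^k)/(2*\<i>))" .
  have p1: "(z*q^2)^k = z^k * (q^k)^2" "(z/q^2)^k = z^k / (q^k)^2"
  proof -
    have "(q^2)^k = (q^k)^2" by (metis power_mult mult.commute)
    then show "(z*q^2)^k = z^k * (q^k)^2" "(z/q^2)^k = z^k / (q^k)^2"
      by (simp_all add: power_mult_distrib power_divide)
  qed
  show ?thesis unfolding L p1 by (rule G) (use q0 q2 qk M0 in auto)
qed

lemma polyid: fixes z p Z M :: complex
  shows "((M+1)*p-(M-1))*(Z-p^2)*p*(z-1)*(z*p-1)*(z-p)^2 - (p-1)*p*(z-1)*(z-p)^2*(p^2-(M-1)*Z+(M-2)*Z*z*p)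
   + ((M+1)-(M-1)*p)*p^2*(z-1)*(z*p-1)^2*(z-p)*(Z*p^2-1) + (p-1)*p^3*(z-1)*(z*p-1)^2*(1-(M-1)*Z*p^2+(M-2)*Z*z*p)
   - 2*(p+1)*p^2*(z*p-1)^2*(z-p)^2*(Z-1)
   = M*(p^2-1)*(p-1)*p^2*(z-1)*(z*p-1)*(z-p) - (p-1)^4*(p+1)*p^2*z*(z+1)*(Z*z^2-1)"
  by (simp add: algebra_simps power2_eq_square power3_eq_cube power4_eq_xxxx)

lemma fcancel: fixes x y K :: complex assumes "K \<noteq> 0" shows "(x*K)/(y*K) = x/y"
  using assms by simp
lemma cancel_form: fixes lhs num Dn X d K :: complex
  assumes "num = X*K" "Dn = d*K" "K \<noteq> 0" "lhs = X/d"
  shows "lhs = num/Dn"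
  using assms fcancel by metis
lemma sum5: fixes x1 x2 x3 x4 x5 D z :: complex
  shows "z*x1/D - z*x2/D + z*x3/D + z*x4/D - z*x5/D = z*(x1-x2+x3+x4-x5)/D"
  by (simp add: diff_divide_distrib add_divide_distrib algebra_simps)
lemma Lgen: fixes z p M Dn R1 R2 u v :: complex assumes "p \<noteq> 0" "u \<noteq> 0" "v \<noteq> 0" "M \<noteq> 0" "Dn \<noteq> 0"
  shows "2 * ((1/(2*\<i>*M*u)) * (z*(R1 - R2)/Dn)) / ((u * v/p)/(2*\<i>))
     = 2*z*p/(M*u^2 * v * Dn) * R1 - 2*z*p/(M*u^2 * v * Dn) * R2"
  using assms by (simp add: field_simps; algebra)
lemma cancel2: fixes num den X d K :: complex
  assumes "num = X*K" "den = d*K" "K \<noteq> 0" shows "num/den = X/d"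
  using assms fcancel by metis

lemma L2gen: fixes z p M C A B E x1 x2 :: complex
  assumes "p \<noteq> 0" "M \<noteq> 0" "C \<noteq> 0" "A \<noteq> 0" "B \<noteq> 0"
  shows "2 * z^2 * p * E * x1 * x2 / (M * C * A^2 * B^2) = - (4 / M * - (E / (2 * p)) * z^2 * x1 * x2 / (C * (A * B / p)^2))"
  using assms by (simp add: field_simps; algebra)

lemma closed:
  fixes z p Z M n :: complex
  assumes p0: "p \<noteq> 0" and z0: "z \<noteq> 0" and a0: "z*p - 1 \<noteq> 0" and b0: "z - p \<noteq> 0"
    and z1: "z - 1 \<noteq> 0" and p1: "p - 1 \<noteq> 0" and pp1: "p + 1 \<noteq> 0" and M0: "M \<noteq> 0"
    and nM: "n = M - 2"
  shows "2 * ((1/(2*\<i>*M*(p-1))) * (((M+1)*p-(M-1)) * ((z*p)*((Z/p^2)-1)/((z*p)-1))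
      - (p-1)*((z*p)*(1-(n+1)*(Z/p^2) + n*((Z/p^2)*(z*p)))/(1-(z*p))^2)
      + ((M+1)-(M-1)*p)*((z/p)*((Z*p^2)-1)/((z/p)-1))
      + (p-1)*((z/p)*(1-(n+1)*(Z*p^2)+n*((Z*p^2)*(z/p)))/(1-z/p)^2)
      - 2*(p+1)*(z*(Z-1)/(z-1)))) / ((p-1/p)/(2*\<i>))
    = 2*z/(z^2-2*((p+1/p)/2)*z+1)
      + 4/M*(1-(p+1/p)/2)*z^2*(z+1)*(Z*z^2-1)/((z-1)*(z^2-2*((p+1/p)/2)*z+1)^2)"
proof -
  define Dn where "Dn = p^2*(z-1)*(z*p-1)^2*(z-p)^2"
  have Dn0: "Dn \<noteq> 0" using p0 z1 a0 b0 by (simp add: Dn_def)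
  have t1: "((M+1)*p-(M-1)) * ((z*p)*((Z/p^2)-1)/((z*p)-1))
      = z*(((M+1)*p-(M-1))*(Z-p^2)*p*(z-1)*(z*p-1)*(z-p)^2)/Dn"
    apply (rule cancel_form[where X="z*(((M+1)*p-(M-1))*(Z-p^2))" and d="p*(z*p-1)" and K="p*(z-1)*(z*p-1)*(z-p)^2"])
    subgoal by algebra
    subgoal unfolding Dn_def by algebra
    subgoal using p0 z1 a0 b0 by simp
    subgoal using p0 a0 by (simp add: field_simps; algebra)
    done
  have t2: "(p-1)*((z*p)*(1-(n+1)*(Z/p^2) + n*((Z/p^2)*(z*p)))/(1-(z*p))^2)
      = z*((p-1)*p*(z-1)*(z-p)^2*(p^2-(M-1)*Z+(M-2)*Z*z*p))/Dn"
    apply (rule cancel_form[where X="z*((p-1)*(p^2-(M-1)*Z+(M-2)*Z*z*p))" and d="p*(z*p-1)^2" and K="p*(z-1)*(z-p)^2"])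
    subgoal by algebra
    subgoal unfolding Dn_def by algebra
    subgoal using p0 z1 a0 b0 by simp
    subgoal proof -
      have ee: "(1-(z*p))^2 = (z*p-1)^2" by algebra
      show ?thesis unfolding ee nM using p0 a0 by (simp add: field_simps; algebra)
    qed
    done
  have t3: "((M+1)-(M-1)*p)*((z/p)*((Z*p^2)-1)/((z/p)-1))
      = z*(((M+1)-(M-1)*p)*p^2*(z-1)*(z*p-1)^2*(z-p)*(Z*p^2-1))/Dn"
    apply (rule cancel_form[where X="z*(((M+1)-(M-1)*p)*(Z*p^2-1))" and d="z-p" and K="p^2*(z-1)*(z*p-1)^2*(z-p)"])
    subgoal by algebra
    subgoal unfolding Dn_def by algebra
    subgoal using p0 z1 a0 b0 by simp
    subgoal proof -
      have ee: "(z/p)-1 = (z-p)/p" using p0 by (simp add: field_simps)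
      show ?thesis unfolding ee using p0 b0 by (simp add: field_simps; algebra)
    qed
    done
  have t4: "(p-1)*((z/p)*(1-(n+1)*(Z*p^2)+n*((Z*p^2)*(z/p)))/(1-z/p)^2)
      = z*((p-1)*p^3*(z-1)*(z*p-1)^2*(1-(M-1)*Z*p^2+(M-2)*Z*z*p))/Dn"
    apply (rule cancel_form[where X="z*((p-1)*p*(1-(M-1)*Z*p^2+(M-2)*Z*z*p))" and d="(z-p)^2" and K="p^2*(z-1)*(z*p-1)^2"])
    subgoal by algebra
    subgoal unfolding Dn_def by algebra
    subgoal using p0 z1 a0 b0 by simp
    subgoal proof -
      have ee: "(1-z/p)^2 = (z-p)^2/p^2" using p0 by (simp add: field_simps; algebra)
      show ?thesis unfolding ee nM using p0 b0 by (simp add: field_simps; algebra)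
    qed
    done
  have t5: "2*(p+1)*(z*(Z-1)/(z-1)) = z*(2*(p+1)*p^2*(z*p-1)^2*(z-p)^2*(Z-1))/Dn"
    apply (rule cancel_form[where X="z*(2*(p+1)*(Z-1))" and d="z-1" and K="p^2*(z*p-1)^2*(z-p)^2"])
    subgoal by algebra
    subgoal unfolding Dn_def by algebra
    subgoal using p0 z1 a0 b0 by simp
    subgoal using z1 by (simp add: field_simps)
    done
  have D: "z^2-2*((p+1/p)/2)*z+1 = (z*p-1)*(z-p)/p" using p0 by (simp add: field_simps; algebra)
  have c1: "1-(p+1/p)/2 = -((p-1)^2/(2*p))" using p0 by (simp add: field_simps; algebra)
  have p2: "p - 1/p = (p-1)*(p+1)/p" using p0 by (simp add: field_simps; algebra)
  note P = polyid[of M p Z z]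
  define R1 where "R1 = M*(p^2-1)*(p-1)*p^2*(z-1)*(z*p-1)*(z-p)"
  define R2 where "R2 = (p-1)^4*(p+1)*p^2*z*(z+1)*(Z*z^2-1)"
  have L: "2 * ((1/(2*\<i>*M*(p-1))) * (z*(R1 - R2)/Dn)) / (((p-1)*(p+1)/p)/(2*\<i>))
     = 2*z*p/(M*(p-1)^2*(p+1)*Dn) * R1 - 2*z*p/(M*(p-1)^2*(p+1)*Dn) * R2"
    by (rule Lgen) (use p0 p1 pp1 M0 Dn0 in auto)
  have L1: "2*z*p/(M*(p-1)^2*(p+1)*Dn) * R1 = 2*z/((z*p-1)*(z-p)/p)"
  proof -
    have "2*z*p/(M*(p-1)^2*(p+1)*Dn) * R1 = (2*z*p*R1)/(M*(p-1)^2*(p+1)*Dn)" by simp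
    also have "\<dots> = (2*z*p)/((z*p-1)*(z-p))"
      apply (rule cancel2[where K="M*(p-1)^2*(p+1)*p^2*(z-1)*(z*p-1)*(z-p)"])
      subgoal unfolding R1_def by algebra
      subgoal unfolding Dn_def by algebra
      subgoal using p0 p1 pp1 M0 z1 a0 b0 by simp
      done
    also have "\<dots> = 2*z/((z*p-1)*(z-p)/p)" using p0 by simp
    finally show ?thesis .
  qed
  have L2: "2*z*p/(M*(p-1)^2*(p+1)*Dn) * R2 = - (4/M*(-((p-1)^2/(2*p)))*z^2*(z+1)*(Z*z^2-1)/((z-1)*((z*p-1)*(z-p)/p)^2))"
  proof -
    have "2*z*p/(M*(p-1)^2*(p+1)*Dn) * R2 = (2*z*p*R2)/(M*(p-1)^2*(p+1)*Dn)" by simp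
    also have "\<dots> = (2*z^2*p*(p-1)^2*(z+1)*(Z*z^2-1))/(M*(z-1)*(z*p-1)^2*(z-p)^2)"
      apply (rule cancel2[where K="(p-1)^2*(p+1)*p^2"])
      subgoal unfolding R2_def by algebra
      subgoal unfolding Dn_def by algebra
      subgoal using p0 p1 pp1 by simp
      done
    also have "\<dots> = - (4/M*(-((p-1)^2/(2*p)))*z^2*(z+1)*(Z*z^2-1)/((z-1)*((z*p-1)*(z-p)/p)^2))"
      by (rule L2gen) (use p0 M0 z1 a0 b0 in auto)
    finally show ?thesis .
  qed
  show ?thesis
    unfolding t1 t2 t3 t4 t5 D c1 p2 sum5 P R1_def[symmetric] R2_def[symmetric] L L1 L2
    by simp
qed

lemma fin_gen: fixes z u cq M D :: complex
  assumes "z \<noteq> 0" "u \<noteq> 0" "M \<noteq> 0" "D \<noteq> 0" "z - 1 \<noteq> 0"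
  shows "u*( ((u+1/u)/2)/(D/(2*z)) + 2/M*((1-cq)/(- ((z-1)^2) / (2*z)))*(((z^2-1)/(2*\<i>*z))/(D/(2*z))^2)*((u-1/u)/(2*\<i>))
         - \<i>*(((u-1/u)/(2*\<i>))/(D/(2*z))) )
       = 2*z/D + 4/M*(1-cq)*z^2*(z+1)*(u^2-1)/((z-1)*D^2)"
  using assms by (simp add: field_simps; algebra)


theorem theorem2:
  fixes N :: nat and t :: real
  assumes "N \<ge> 1" and "0 < t" and "t < pi" and "t \<noteq> 2 * pi / (real N + 2)"
  shows "let c = cos (2 * pi / (real N + 2)) in
    4 * (cmod (P_poly N (cis t)))\<^sup>2 =
      (cos ((real N + 2) * t / 2) / (cos t - c)
        + 2 / (real N + 2) * ((1 - c) / (1 - cos t)) * (sin t / (cos t - c)\<^sup>2)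
          * sin ((real N + 2) * t / 2))\<^sup>2
      + (sin ((real N + 2) * t / 2) / (cos t - c))\<^sup>2"
proof -
  define M where "M = real N + 2"
  define w where "w = pi / M"
  define q where "q = cis w"
  define p where "p = q^2"
  define z where "z = cis t"
  define Z where "Z = z^N"
  define h where "h = (real N + 2) * t / 2"
  define u where "u = cis h"
  define c where "c = cos (2 * pi / (real N + 2))"
  have M3: "M \<ge> 3" using assms(1) by (simp add: M_def)
  have M0: "M \<noteq> 0" "complex_of_real M \<noteq> 0" using M3 by auto
  have w0: "0 < w" using M3 by (simp add: w_def)
  have w3: "2*w < pi"
  proof -
    have "2*w = pi * (2/M)" by (simp add: w_def)
    also have "\<dots> < pi * 1" using M3 by (intro mult_strict_left_mono) auto
    finally show ?thesis by simp
  qed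
  have sw: "sin w \<noteq> 0" using w0 w3 sin_gt_zero[of w] by auto
  have s2w: "sin (2*w) > 0" using w0 w3 by (intro sin_gt_zero) auto
  have pc: "p = cis (2*w)" unfolding p_def q_def by (simp add: Complex.DeMoivre)
  have p0: "p \<noteq> 0" by (simp add: pc)
  have p1: "p - 1 \<noteq> 0" "p + 1 \<noteq> 0"
    using s2w by (auto simp: pc complex_eq_iff)
  have cw: "2 * pi / (real N + 2) = 2*w" by (simp add: w_def M_def)
  have st: "sin t > 0" using assms by (intro sin_gt_zero) auto
  have z0: "z \<noteq> 0" "z - 1 \<noteq> 0" using st by (auto simp: z_def complex_eq_iff)
  have ct1: "cos t \<noteq> 1"
  proof
    assume "cos t = 1"
    hence "t = 0" using cos_inj_pi[of t 0] assms(2,3) by simp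
    thus False using assms(2) by simp
  qed
  have ctc: "cos t \<noteq> c"
  proof
    assume "cos t = c"
    hence "cos t = cos (2*w)" by (simp add: c_def cw)
    hence "t = 2*w" using cos_inj_pi[of t "2*w"] assms(2,3) w0 w3 by simp
    thus False using assms(4) cw by simp
  qed
  have cq: "complex_of_real c = (p + 1/p)/2" by (simp add: c_def cw cos_cis' pc)
  have ct: "complex_of_real (cos t) = (z + 1/z)/2" by (simp add: cos_cis' z_def)
  have stz: "complex_of_real (sin t) = (z^2 - 1)/(2*\<i>*z)"
    using z0 by (simp add: sin_cis' z_def[symmetric] field_simps power2_eq_square)
  have ctcq: "(z + 1/z)/2 - (p + 1/p)/2 = (z*p-1)*(z-p)/(2*z*p)"
    using z0 p0 by (simp add: field_simps; algebra)
  have "complex_of_real (cos t) - complex_of_real c \<noteq> 0" using ctc by simp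
  hence ab: "z*p - 1 \<noteq> 0" "z - p \<noteq> 0" unfolding ct cq ctcq by auto
  have bk: "b_coef N k * sin (real k * pi / (real N + 2)) =
     ((M - real k + 1) * sin (real k * w + w) - (M - real k - 1) * sin (real k * w - w)) / (M * sin w) * sin (real k * w)" for k
  proof -
    have e: "(real k + 1) * pi / (real N + 2) = real k * w + w" "(real k - 1) * pi / (real N + 2) = real k * w - w"
      "pi / (real N + 2) = w" "real k * pi / (real N + 2) = real k * w"
      "real N - real k + 3 = M - real k + 1" "real N - real k + 1 = M - real k - 1" "real N + 2 = M"
  proof -
    have N2: "real N + 2 > 0" by simp
    have wN: "w = pi / (real N + 2)" by (simp add: w_def M_def)
    show "(real k + 1) * pi / (real N + 2) = real k * w + w" unfolding wN by (simp add: distrib_right add_divide_distrib)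
    show "(real k - 1) * pi / (real N + 2) = real k * w - w" unfolding wN by (simp add: left_diff_distrib diff_divide_distrib)
    show "pi / (real N + 2) = w" "real k * pi / (real N + 2) = real k * w" unfolding wN by simp_all
    show "real N - real k + 3 = M - real k + 1" "real N - real k + 1 = M - real k - 1" "real N + 2 = M"
      by (simp_all add: M_def)
  qed
    show ?thesis unfolding b_coef_def e(1-4) unfolding e(5-7) by (rule refl)
  qed
  define K where "K = 1/(2*\<i>*complex_of_real M*(p-1))"
  have S: "(\<Sum>k=1..N. complex_of_real (b_coef N k * sin (real k * pi / (real N + 2))) * z^k)
     = K * (((of_real M+1)*p-(of_real M-1)) * (\<Sum>k=1..N. (z*p)^k) - (p-1)*(\<Sum>k=1..N. of_nat k * (z*p)^k)
        + ((of_real M+1)-(of_real M-1)*p)*(\<Sum>k=1..N.(z/p)^k) + (p-1)*(\<Sum>k=1..N. of_nat k*(z/p)^k)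
        - 2*(p+1)*(\<Sum>k=1..N. z^k))"
  proof -
    have "(\<Sum>k=1..N. complex_of_real (b_coef N k * sin (real k * pi / (real N + 2))) * z^k)
       = (\<Sum>k=1..N. K * (((of_real M+1)*p-(of_real M-1)) * (z*p)^k - (p-1) * (of_nat k * (z*p)^k)
          + ((of_real M+1)-(of_real M-1)*p) * (z/p)^k + (p-1) * (of_nat k * (z/p)^k) - 2*(p+1) * z^k))"
      unfolding bk K_def p_def q_def by (rule sum.cong[OF refl], rule pointwise[OF M0(1) sw])
    also have "\<dots> = K * (((of_real M+1)*p-(of_real M-1)) * (\<Sum>k=1..N. (z*p)^k) - (p-1)*(\<Sum>k=1..N. of_nat k * (z*p)^k)
        + ((of_real M+1)-(of_real M-1)*p)*(\<Sum>k=1..N.(z/p)^k) + (p-1)*(\<Sum>k=1..N. of_nat k*(z/p)^k)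
        - 2*(p+1)*(\<Sum>k=1..N. z^k))"
      by (simp add: sum_distrib_left[symmetric] sum.distrib sum_subtractf)
    finally show ?thesis .
  qed
  have pN: "p^N = 1/p^2"
  proof -
    have "p^N * p^2 = p^(N+2)" by (rule power_add[symmetric])
    also have "\<dots> = cis (real (N+2) * (2*w))" unfolding pc by (rule Complex.DeMoivre)
    also have "real (N+2) * (2*w) = 2*pi"
    proof -
      have rM: "real (N+2) = M" by (simp add: M_def)
      show ?thesis unfolding rM w_def using M0(1) by simp
    qed
    finally have "p^N * p^2 = 1" by simp
    thus ?thesis using p0 by (simp add: field_simps)
  qed
  have zpN: "(z*p)^N = Z/p^2" "(z/p)^N = Z*p^2"
    using pN p0 by (simp_all add: Z_def power_mult_distrib power_divide)
  have g1: "z*p \<noteq> 1" "z/p \<noteq> 1" "z \<noteq> 1" using ab z0 p0 by (auto simp: field_simps)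
  have sin2: "complex_of_real (sin (2 * pi / (real N + 2))) = (p - 1/p)/(2*\<i>)"
    by (simp add: cw sin_cis' pc)
  have P2: "2 * P_poly N z = 2 * (K * (((of_real M+1)*p-(of_real M-1)) * ((z*p)*((Z/p^2)-1)/((z*p)-1))
      - (p-1)*((z*p)*(1-(of_nat N+1)*(Z/p^2) + of_nat N*((Z/p^2)*(z*p)))/(1-(z*p))^2)
      + ((of_real M+1)-(of_real M-1)*p)*((z/p)*((Z*p^2)-1)/((z/p)-1))
      + (p-1)*((z/p)*(1-(of_nat N+1)*(Z*p^2)+ of_nat N*((Z*p^2)*(z/p)))/(1-z/p)^2)
      - 2*(p+1)*(z*(Z-1)/(z-1)))) / ((p-1/p)/(2*\<i>))"
    unfolding P_poly_def S sin2 geo1[OF g1(1)] geo1[OF g1(2)] geo1[OF g1(3)] geo2[OF g1(1)] geo2[OF g1(2)] zpN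
      Z_def[symmetric]
    by simp
  have Dc: "complex_of_real c = (p + 1/p)/2" by (rule cq)
  define D where "D = z^2 - 2*complex_of_real c*z + 1"
  have P3: "2 * P_poly N z = 2*z/D + 4/complex_of_real M*(1-complex_of_real c)*z^2*(z+1)*(Z*z^2-1)/((z-1)*D^2)"
    unfolding P2 K_def D_def Dc
    by (rule closed) (use p0 z0 ab p1 M0 in \<open>auto simp: M_def\<close>)
  define A where "A = cos h / (cos t - c) + 2 / (real N + 2) * ((1 - c) / (1 - cos t)) * (sin t / (cos t - c)\<^sup>2) * sin h"
  define B where "B = sin h / (cos t - c)"
  have u2: "u^2 = Z*z^2"
  proof -
    have "u^2 = cis (real 2 * h)" unfolding u_def by (rule Complex.DeMoivre)
    also have "real 2 * h = real (N+2) * t" by (simp add: h_def)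
    also have "cis (real (N+2) * t) = z^(N+2)" unfolding z_def by (rule Complex.DeMoivre[symmetric])
    finally show ?thesis by (simp add: Z_def power_add power2_eq_square)
  qed
  have u0: "u \<noteq> 0" by (simp add: u_def)
  have ch: "complex_of_real (cos h) = (u + 1/u)/2" by (simp add: cos_cis' u_def)
  have sh: "complex_of_real (sin h) = (u - 1/u)/(2*\<i>)" by (simp add: sin_cis' u_def)
  have e1: "complex_of_real (cos t) - complex_of_real c = D/(2*z)"
    unfolding ct D_def using z0 by (simp add: field_simps; algebra)
  have e2: "1 - complex_of_real (cos t) = - ((z-1)^2) / (2*z)"
    unfolding ct using z0 by (simp add: field_simps; algebra)
  have D0: "D \<noteq> 0"
  proof
    assume "D = 0"
    hence "complex_of_real (cos t) - complex_of_real c = 0" unfolding e1 by simp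
    thus False using ctc by simp
  qed
  have AC: "complex_of_real A = complex_of_real (cos h)/(complex_of_real (cos t) - complex_of_real c)
      + 2/complex_of_real M*((1 - complex_of_real c)/(1 - complex_of_real (cos t)))
        *(complex_of_real (sin t)/(complex_of_real (cos t) - complex_of_real c)^2)*complex_of_real (sin h)"
    by (simp add: A_def M_def)
  have BC: "complex_of_real B = complex_of_real (sin h)/(complex_of_real (cos t) - complex_of_real c)"
    by (simp add: B_def)
  have key: "2 * P_poly N z = u * (complex_of_real A - \<i> * complex_of_real B)"
    unfolding P3 AC BC e1 e2 stz ch sh u2[symmetric]
    by (rule fin_gen[symmetric]) (use z0 u0 M0 D0 in auto)
  have "4 * (cmod (P_poly N z))^2 = (cmod (2 * P_poly N z))^2"
    by (simp add: norm_mult power_mult_distrib)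
  also have "\<dots> = (cmod (complex_of_real A - \<i> * complex_of_real B))^2"
    unfolding key by (simp add: norm_mult u_def)
  also have "\<dots> = A^2 + B^2" by (simp add: cmod_power2)
  finally have fin: "4 * (cmod (P_poly N z))^2 = A^2 + B^2" .
  show ?thesis
    unfolding Let_def c_def[symmetric] h_def[symmetric] z_def[symmetric] A_def[symmetric] B_def[symmetric]
    by (rule fin)
qed
end
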